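(* Let $\lambda\ge0$, $\delta>0$, and let $\rho_c$ ($c>0$) be as in the context. Let $0<a<b$. Then for all $s<u<t$ and $x<z<y$, $$\rho_b(s,x,u,z)\rho_a(u,z,t,y)\le D\Big[\rho_{b-a}(s,x,u,z)\vee\rho_a(u,z,t,y)\Big]\rho_a(s,x,t,y),$$ with $D=\left(\frac{b}{b-a}\right)^{3/2}\exp\left[\frac32\, l\!\left(\frac{a}{b-a}\right)\right]$, where $$l(\alpha)=\max_{\tau\ge\alpha\vee1/\alpha}\left[\ln(1+\tau)-\frac{\tau-\alpha}{1+\tau}\ln(\alpha\tau)\right].$$
   Context: For $t>0$, $z\in\mathbb{R}$ let $p(t,z)=(4\pi)^{-1/2}\delta t z^{-3/2}\exp\{-(\delta t-2\sqrt{\lambda}z)^2/(4z)\}\mathbf 1_{z>0}$. For $c>0$ put $\rho_c(s,x,t,y)=c\,p(c(t-s),c(y-x))$ if $s<t$, and $0$ otherwise. *)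

theory Defs
  imports Complex_Main
begin

definition pdens :: "real \<Rightarrow> real \<Rightarrow> real \<Rightarrow> real \<Rightarrow> real" where
  "pdens delta lam t z =
     (if z > 0 then (4 * pi) powr (-1/2) * delta * t * z powr (-3/2)
        * exp (- ((delta * t - 2 * sqrt lam * z)^2) / (4 * z))
      else 0)"

definition rho :: "real \<Rightarrow> real \<Rightarrow> real \<Rightarrow> real \<Rightarrow> real \<Rightarrow> real \<Rightarrow> real \<Rightarrow> real" where
  "rho delta lam c s x t y =
     (if s < t then c * pdens delta lam (c * (t - s)) (c * (y - x)) else 0)"

definition lfun :: "real \<Rightarrow> real" where
  "lfun alpha = (SUP tau \<in> {max alpha (1/alpha)..}.
      ln (1 + tau) - (tau - alpha) / (1 + tau) * ln (alpha * tau))"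

definition Dconst :: "real \<Rightarrow> real \<Rightarrow> real" where
  "Dconst a b = (b / (b - a)) powr (3/2) * exp (3/2 * lfun (a / (b - a)))"

end

theory Submission imports Defs begin

definition sqd :: "real \<Rightarrow> real \<Rightarrow> real \<Rightarrow> real \<Rightarrow> real" where
  "sqd d m T Y = (d*T - m*Y)^2/(4*Y)"
definition lr :: "real \<Rightarrow> real \<Rightarrow> real \<Rightarrow> real \<Rightarrow> real \<Rightarrow> real \<Rightarrow> real" where
  "lr K d m c T Y = K + ln c / 2 + ln T - 3/2 * ln Y - c * sqd d m T Y"

lemma rho_exp:
  fixes delta lam c s x t y :: real
  assumes "delta > 0" "c > 0" "s < t" "x < y"
  shows "rho delta lam c s x t y
     = exp (lr (ln ((4*pi) powr (-1/2) * delta)) delta (2*sqrt lam) c (t-s) (y-x))"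
proof -
  define T where "T = t - s"
  define Y where "Y = y - x"
  define C where "C = (4*pi) powr (-1/2) * delta"
  have T: "T > 0" and Y: "Y > 0" and C: "C > 0" using assms by (auto simp: T_def Y_def C_def)
  have cY: "c*Y > 0" using assms Y by simp
  have ex: "- ((delta * (c*T) - 2 * sqrt lam * (c*Y))^2) / (4 * (c*Y)) = - (c * sqd delta (2*sqrt lam) T Y)"
    using assms Y by (simp add: sqd_def power2_eq_square field_simps)
  have pw: "(c*Y) powr (-3/2) = c powr (-3/2) * Y powr (-3/2)"
    using assms Y by (simp add: powr_mult)
  have pc: "c * c * c powr (-3/2) = c powr (1/2)"
  proof -
    have "c * c * c powr (-3/2) = c powr 1 * c powr 1 * c powr (-3/2)" using assms by simp
    also have "\<dots> = c powr (1 + 1 + (-3/2))" by (simp only: powr_add)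
    also have "(1 + 1 + (-3/2)::real) = 1/2" by simp
    finally show ?thesis .
  qed
  have "rho delta lam c s x t y = c * (C * (c*T) * (c*Y) powr (-3/2)
        * exp (- ((delta * (c*T) - 2 * sqrt lam * (c*Y))^2) / (4 * (c*Y))))"
    using assms cY by (simp add: rho_def pdens_def T_def Y_def C_def)
  also have "\<dots> = C * (c * c * c powr (-3/2)) * T * Y powr (-3/2) * exp (- (c * sqd delta (2*sqrt lam) T Y))"
    by (simp only: ex pw) (simp add: algebra_simps)
  also have "\<dots> = C * c powr (1/2) * T * Y powr (-3/2) * exp (- (c * sqd delta (2*sqrt lam) T Y))"
    by (simp only: pc)
  also have "\<dots> = exp (lr C' delta (2*sqrt lam) c T Y)" if "C' = ln C" for C'
  proof -
    have "exp (lr C' delta (2*sqrt lam) c T Y) = exp C' * exp (ln c / 2) * exp (ln T) / exp (3/2 * ln Y)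
         / exp (c * sqd delta (2*sqrt lam) T Y)"
      by (simp only: lr_def exp_add exp_diff)
    also have "exp (ln c / 2) = c powr (1/2)" using assms by (simp add: powr_def)
    also have "exp (3/2 * ln Y) = Y powr (3/2)" using Y by (simp add: powr_def)
    finally have e: "exp (lr C' delta (2*sqrt lam) c T Y) = exp C' * c powr (1/2) * exp (ln T) / Y powr (3/2) / exp (c * sqd delta (2*sqrt lam) T Y)" .
    have "Y powr (-3/2) = 1 / Y powr (3/2)" using Y by (simp add: powr_minus_divide)
    then show ?thesis unfolding e using that C T by (simp add: exp_minus field_simps)
  qed
  finally show ?thesis by (simp add: C_def T_def Y_def)
qed

lemma cs_ineq:
  fixes p1 p2 Y1 Y2 :: real
  assumes "Y1 > 0" "Y2 > 0"
  shows "(p1+p2)^2/(4*(Y1+Y2)) \<le> p1^2/(4*Y1) + p2^2/(4*Y2)"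
proof -
  have "(p1^2*Y2 + p2^2*Y1)*(Y1+Y2) - (p1+p2)^2*(Y1*Y2) = (p1*Y2 - p2*Y1)^2"
    by (simp add: power2_eq_square algebra_simps)
  hence "(p1+p2)^2 * (Y1*Y2) \<le> (p1^2*Y2 + p2^2*Y1) * (Y1+Y2)"
    using zero_le_power2[of "p1*Y2 - p2*Y1"] by linarith
  then show ?thesis using assms by (simp add: divide_simps) (simp add: algebra_simps)
qed

lemma ent_bound:
  fixes th :: real
  assumes "th > 0"
  shows "- (th * ln th) \<le> 2/3 * ln 2"
proof -
  have "ln (1/(th * exp 1)) \<le> 1/(th * exp 1) - 1"
    using assms by (intro ln_le_minus_one) simp
  moreover have "ln (1/(th * exp 1)) = - ln th - 1"
    using assms by (simp add: ln_div ln_mult)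
  ultimately have "- ln th \<le> 1/(th * exp 1)" by simp
  hence "th * (- ln th) \<le> th * (1/(th * exp 1))" using assms by (intro mult_left_mono) auto
  hence h1: "- (th * ln th) \<le> 1 / exp 1" using assms by simp
  have "exp (1/4::real) \<ge> 5/4" using exp_ge_add_one_self[of "1/4::real"] by simp
  hence "exp (1/4::real) ^ 4 \<ge> (5/4)^4" by (intro power_mono) auto
  moreover have "exp (1/4::real) ^ 4 = exp 1"
    by (subst exp_of_nat_mult[symmetric]) simp
  ultimately have eb: "exp 1 \<ge> (5/4::real)^4" by simp
  hence eb: "exp 1 \<ge> (625/256::real)" by (simp add: power4_eq_xxxx)
  have lnlow: "ln x \<ge> 1 - 1/x" if "x > 0" for x :: real
  proof -
    have "ln (1/x) \<le> 1/x - 1" using that by (intro ln_le_minus_one) simp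
    thus ?thesis using that by (simp add: ln_div)
  qed
  have "ln (2::real) = ln (5/4) + ln (6/5) + ln (7/6) + ln (8/7)"
    by (simp add: ln_mult_pos[symmetric])
  moreover have "ln (5/4::real) \<ge> 1/5" using lnlow[of "5/4"] by simp
  moreover have "ln (6/5::real) \<ge> 1/6" using lnlow[of "6/5"] by simp
  moreover have "ln (7/6::real) \<ge> 1/7" using lnlow[of "7/6"] by simp
  moreover have "ln (8/7::real) \<ge> 1/8" using lnlow[of "8/7"] by simp
  ultimately have l2: "ln (2::real) \<ge> 533/840" by simp
  have "1 / exp 1 \<le> 1 / (625/256::real)" using eb by (intro divide_left_mono) auto
  thus ?thesis using h1 l2 by simp
qed

lemma lfun_lower:
  fixes al :: real
  assumes "al > 0"
  shows "ln (1 + max al (1/al)) \<le> lfun al"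
proof -
  define t0 where "t0 = max al (1/al)"
  define f where "f = (\<lambda>tau. ln (1 + tau) - (tau - al) / (1 + tau) * ln (al * tau))"
  have t01: "t0 \<ge> 1"
  proof (cases "al \<ge> 1")
    case True thus ?thesis by (simp add: t0_def)
  next
    case False
    hence "1/al \<ge> 1" using assms by (simp add: divide_simps)
    thus ?thesis by (simp add: t0_def)
  qed
  have ft0: "f t0 = ln (1 + t0)"
  proof (cases "al \<ge> 1/al")
    case True thus ?thesis by (simp add: t0_def f_def max_def)
  next
    case False thus ?thesis using assms by (simp add: t0_def f_def max_def)
  qed
  have bdd: "bdd_above (f ` {t0..})"
  proof (rule bdd_aboveI2)
    fix tau assume "tau \<in> {t0..}"
    hence tt: "tau \<ge> t0" by simp
    hence tau1: "tau \<ge> 1" using t01 by simp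
    have "al * tau \<ge> al * (1/al)" using tt assms by (intro mult_left_mono) (auto simp: t0_def)
    hence at1: "al * tau \<ge> 1" using assms by simp
    define L where "L = ln (al * tau)"
    have L0: "L \<ge> 0" using at1 by (simp add: L_def)
    have L1: "L \<le> al * tau" using ln_le_minus_one[of "al*tau"] at1 by (simp add: L_def)
    have fe: "f tau = ln ((1+tau)/(al*tau)) + (1+al)/(1+tau) * L"
      using tau1 assms by (simp add: f_def L_def ln_div field_simps)
    have "ln ((1+tau)/(al*tau)) \<le> (1+tau)/(al*tau) - 1"
      using tau1 assms by (intro ln_le_minus_one) simp
    also have "(1+tau)/(al*tau) \<le> 2/al"
      using tau1 assms by (simp add: divide_simps)
    finally have p1: "ln ((1+tau)/(al*tau)) \<le> 2/al" by simp
    have "(1+al)/(1+tau) * L \<le> (1+al)/(1+tau) * (al*tau)"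
      using L1 tau1 assms by (intro mult_left_mono) auto
    also have "\<dots> \<le> (1+al) * al"
      using tau1 assms by (simp add: divide_simps)
    finally have p2: "(1+al)/(1+tau) * L \<le> (1+al) * al" .
    show "f tau \<le> 2/al + (1+al)*al" using fe p1 p2 by simp
  qed
  have "f t0 \<le> (SUP tau \<in> {t0..}. f tau)"
    by (rule cSUP_upper) (use bdd in auto)
  moreover have "lfun al = (SUP tau \<in> {t0..}. f tau)" by (simp add: lfun_def f_def t0_def)
  ultimately show ?thesis using ft0 by (simp add: t0_def)
qed


lemma core:
  fixes K d m a b T1 T2 Y1 Y2 :: real
  assumes a0: "0 < a" and ab: "a < b" and T1: "T1 > 0" and T2: "T2 > 0" and Y1: "Y1 > 0" and Y2: "Y2 > 0"
  shows "lr K d m b T1 Y1 + lr K d m a T2 Y2 \<le> 3/2 * ln (b/(b-a)) + 3/2 * ln (max (b/(b-a)) (b/a))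
     + max (lr K d m (b-a) T1 Y1) (lr K d m a T2 Y2) + lr K d m a (T1+T2) (Y1+Y2)"
proof -
  define k where "k = b/(b-a)"
  define h where "h = b/a"
  define M where "M = max k h"
  define T where "T = T1 + T2"
  define Y where "Y = Y1 + Y2"
  define s1 where "s1 = sqd d m T1 Y1"
  define s2 where "s2 = sqd d m T2 Y2"
  define s where "s = sqd d m T Y"
  define L1 where "L1 = lr K d m b T1 Y1"
  define L2 where "L2 = lr K d m a T2 Y2"
  define P1 where "P1 = lr K d m (b-a) T1 Y1"
  define R where "R = lr K d m a T Y"
  have bma: "b - a > 0" using ab by simp
  have b0: "b > 0" using a0 ab by simp
  have T: "T > 0" and Y: "Y > 0" using T1 T2 Y1 Y2 by (auto simp: T_def Y_def)
  have k1: "k > 1" using a0 ab by (simp add: k_def)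
  have h1: "h > 1" using a0 ab by (simp add: h_def)
  have inv: "1/k + 1/h = 1" using a0 ab by (simp add: k_def h_def field_simps)
  have Mk: "M \<ge> k" and Mh: "M \<ge> h" by (auto simp: M_def)
  have M2: "M \<ge> 2"
  proof (rule ccontr)
    assume "\<not> M \<ge> 2"
    hence "k < 2" "h < 2" using Mk Mh by auto
    hence "1/k > 1/2" "1/h > 1/2" using k1 h1 by (auto simp: divide_simps)
    thus False using inv by simp
  qed
  have M0: "M > 0" using M2 by simp
  have lnk: "ln k = ln b - ln (b-a)" using b0 bma by (simp add: k_def ln_div)
  have lnh: "ln h = ln b - ln a" using b0 a0 by (simp add: h_def ln_div)
  have lnk0: "ln k \<ge> 0" using k1 by simp
  have lnkM: "ln k \<le> ln M" using Mk k1 by simp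
  have lnhM: "ln h \<le> ln M" using Mh h1 by simp
  have lnM2: "ln 2 \<le> ln M" using M2 by simp
  have lnT1: "ln T1 \<le> ln T" and lnT2: "ln T2 \<le> ln T" using T1 T2 by (auto simp: T_def)
  have sdef: "s = (d*T1 - m*Y1 + (d*T2 - m*Y2))^2/(4*(Y1+Y2))"
    by (simp add: s_def sqd_def T_def Y_def algebra_simps)
  have s1def: "s1 = (d*T1 - m*Y1)^2/(4*Y1)" by (simp add: s1_def sqd_def)
  have s2def: "s2 = (d*T2 - m*Y2)^2/(4*Y2)" by (simp add: s2_def sqd_def)
  have goal: "L1 + L2 \<le> 3/2 * ln k + 3/2 * ln M + max P1 L2 + R"
  proof (cases "Y2 \<ge> Y/M")
    case True
    have q: "s \<le> s1 + s2" unfolding sdef s1def s2def using cs_ineq[OF Y1 Y2] .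
    have "Y \<le> M * Y2" using True M0 by (simp add: divide_simps mult.commute)
    hence "ln Y \<le> ln (M * Y2)" using Y by simp
    hence lY: "ln Y \<le> ln M + ln Y2" using M0 Y2 by (simp add: ln_mult)
    have q': "a * s \<le> a * s1 + a * s2" using q a0 by (simp add: distrib_left[symmetric])
    have e1: "(b-a) * s1 = b * s1 - a * s1" by (simp add: algebra_simps)
    have "L1 + L2 - P1 - R = ln b/2 - ln (b-a)/2 + (ln T2 - ln T) - 3/2*ln Y2 + 3/2*ln Y - b*s1 + (b-a)*s1 - a*s2 + a*s"
      by (simp add: L1_def L2_def P1_def R_def lr_def s1_def s2_def s_def algebra_simps)
    hence "L1 + L2 \<le> 3/2 * ln k + 3/2 * ln M + P1 + R"
      using lnk lnk0 lnT2 lY q' e1 by linarith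
    thus ?thesis by linarith
  next
    case False
    define th where "th = k * Y2 / Y"
    have th0: "th > 0" using k1 Y2 Y by (simp add: th_def)
    have "th < k / M" using False k1 Y M0 by (simp add: th_def divide_simps mult.commute)
    also have "k / M \<le> 1" using Mk M0 by simp
    finally have th1: "th < 1" .
    have "Y1 = Y - Y2" by (simp add: Y_def)
    also have "Y - Y2 \<ge> Y - Y/M" using False by simp
    finally have "Y1 \<ge> Y * (1 - 1/M)" by (simp add: algebra_simps)
    moreover have "1 - 1/M \<ge> 1/k"
    proof -
      have "1/M \<le> 1/h" using Mh h1 by (intro divide_left_mono) auto
      thus ?thesis using inv by simp
    qed
    ultimately have "Y1 \<ge> Y * (1/k)" using Y by (meson mult_left_mono less_le order_trans)
    hence "Y \<le> k * Y1" using k1 by (simp add: divide_simps mult.commute)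
    hence "ln Y \<le> ln (k * Y1)" using Y by simp
    hence lY1: "ln Y - ln Y1 \<le> ln k" using k1 Y1 by (simp add: ln_mult)
    have lth: "ln th = ln k + ln Y2 - ln Y" using k1 Y2 Y by (simp add: th_def ln_div ln_mult)
    have "th * (b-a) = b * Y2 / Y"
      using bma by (simp add: th_def k_def)
    hence pth: "b - th * (b-a) = b * Y1 / Y"
      using Y by (simp add: Y_def field_simps)
    define d1 where "d1 = d*T1 - m*Y1"
    define d2 where "d2 = d*T2 - m*Y2"
    have sq: "(b-a)*b*d1^2 + a*b*d2^2 - a*(b-a)*(d1+d2)^2 = ((b-a)*d1 - a*d2)^2"
      by (simp add: power2_eq_square algebra_simps)
    have "(b-a)*(a*(d1+d2)^2) \<le> (b-a)*(b*d1^2 + b/(b-a)*a*d2^2)"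
    proof -
      have "(b-a)*(b*d1^2 + b/(b-a)*a*d2^2) = (b-a)*b*d1^2 + a*b*d2^2"
        using bma by (simp add: distrib_left)
      moreover have "(b-a)*(a*(d1+d2)^2) = a*(b-a)*(d1+d2)^2" by (simp add: algebra_simps)
      ultimately show ?thesis using sq zero_le_power2[of "(b-a)*d1 - a*d2"] by linarith
    qed
    hence qq: "a*(d1+d2)^2 \<le> b*d1^2 + b/(b-a)*a*d2^2" using bma by simp
    have qpart: "a*s - (b - th*(b-a))*s1 - th*a*s2 \<le> 0"
    proof -
      have "(b - th*(b-a))*s1 = b*d1^2/(4*Y)"
        unfolding pth s1def d1_def using Y1 by (simp add: field_simps)
      moreover have "th*a*s2 = b/(b-a)*a*d2^2/(4*Y)"
        unfolding s2def d2_def th_def k_def using Y2 Y bma by (simp add: field_simps)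
      moreover have "a*s = a*(d1+d2)^2/(4*Y)" unfolding sdef d1_def d2_def Y_def by simp
      moreover have "a*(d1+d2)^2/(4*Y) \<le> (b*d1^2 + b/(b-a)*a*d2^2)/(4*Y)"
        using qq Y by (intro divide_right_mono) auto
      ultimately show ?thesis by (simp add: add_divide_distrib)
    qed
    have tpart: "(1-th)*ln T1 + th*ln T2 \<le> ln T"
    proof -
      have "(1-th)*ln T1 \<le> (1-th)*ln T" using lnT1 th1 by (intro mult_left_mono) auto
      moreover have "th*ln T2 \<le> th*ln T" using lnT2 th0 by (intro mult_left_mono) auto
      ultimately show ?thesis by (simp add: algebra_simps)
    qed
    have ypart: "(1-th)*(ln Y - ln Y1) + th*(ln Y - ln Y2) \<le> ln k - th * ln th"
    proof -
      have "(1-th)*(ln Y - ln Y1) \<le> (1-th)*ln k" using lY1 th1 by (intro mult_left_mono) auto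
      moreover have "th*(ln Y - ln Y2) = th * ln k - th * ln th"
        by (simp add: lth right_diff_distrib[symmetric] del: right_diff_distrib)
      ultimately show ?thesis by (simp add: algebra_simps)
    qed
    have ent: "- (th * ln th) \<le> 2/3 * ln M" using ent_bound[OF th0] lnM2 by linarith
    have cpart: "th/2 * ln k + (1-th)/2 * ln h \<le> 1/2 * ln M"
    proof -
      have "th/2 * ln k \<le> th/2 * ln M" using lnkM th0 by (intro mult_left_mono) auto
      moreover have "(1-th)/2 * ln h \<le> (1-th)/2 * ln M" using lnhM th1 by (intro mult_left_mono) auto
      ultimately show ?thesis by (simp add: algebra_simps)
    qed
    have mix: "th*P1 + (1-th)*L2 \<le> max P1 L2"
    proof -
      have "th*P1 \<le> th * max P1 L2" using th0 by (intro mult_left_mono) auto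
      moreover have "(1-th)*L2 \<le> (1-th) * max P1 L2" using th1 by (intro mult_left_mono) auto
      ultimately show ?thesis by (simp add: algebra_simps)
    qed
    have ident: "L1 + L2 - th*P1 - (1-th)*L2 - R = th/2 * ln k + (1-th)/2 * ln h
       + ((1-th)*ln T1 + th*ln T2 - ln T) + 3/2 * ((1-th)*(ln Y - ln Y1) + th*(ln Y - ln Y2))
       + (a*s - (b - th*(b-a))*s1 - th*a*s2)"
      unfolding lnk lnh L1_def L2_def P1_def R_def lr_def s1_def s2_def s_def by (simp add: field_simps)
    have "L1 + L2 \<le> 3/2 * ln k + 3/2 * ln M + (th*P1 + (1-th)*L2) + R"
    proof -
      have y3: "3/2 * ((1-th)*(ln Y - ln Y1) + th*(ln Y - ln Y2)) \<le> 3/2 * ln k + 3/2 * (- (th * ln th))"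
        using ypart by simp
      have "L1 + L2 - th*P1 - (1-th)*L2 - R \<le> 3/2 * ln k + 3/2 * ln M"
        unfolding ident using qpart tpart y3 ent cpart by linarith
      thus ?thesis by simp
    qed
    thus ?thesis using mix by linarith
  qed
  thus ?thesis by (simp add: L1_def L2_def P1_def R_def k_def h_def M_def T_def Y_def)
qed


theorem theorem2p2:
  fixes lam delta a b s u t x z y :: real
  assumes "lam \<ge> 0" and "delta > 0" and "0 < a" and "a < b"
    and "s < u" and "u < t" and "x < z" and "z < y"
  shows "rho delta lam b s x u z * rho delta lam a u z t y
    \<le> Dconst a b * max (rho delta lam (b - a) s x u z) (rho delta lam a u z t y)
        * rho delta lam a s x t y"
proof -
  define K where "K = ln ((4*pi) powr (-1/2) * delta)"
  define m where "m = 2 * sqrt lam"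
  have bma: "b - a > 0" and b0: "b > 0" using assms by auto
  have r1: "rho delta lam b s x u z = exp (lr K delta m b (u-s) (z-x))"
    using rho_exp[of delta b s u x z lam] assms b0 by (simp add: K_def m_def)
  have r2: "rho delta lam a u z t y = exp (lr K delta m a (t-u) (y-z))"
    using rho_exp[of delta a u t z y lam] assms by (simp add: K_def m_def)
  have r3: "rho delta lam (b-a) s x u z = exp (lr K delta m (b-a) (u-s) (z-x))"
    using rho_exp[of delta "b-a" s u x z lam] assms bma by (simp add: K_def m_def)
  have r4: "rho delta lam a s x t y = exp (lr K delta m a ((u-s)+(t-u)) ((z-x)+(y-z)))"
    using rho_exp[of delta a s t x y lam] assms by (simp add: K_def m_def)
  define al where "al = a/(b-a)"
  have al0: "al > 0" using assms bma by (simp add: al_def)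
  have mx: "1 + max al (1/al) = max (b/(b-a)) (b/a)"
  proof -
    have "1 + al = b/(b-a)" using bma by (simp add: al_def field_simps)
    moreover have "1 + 1/al = b/a" using bma assms by (simp add: al_def field_simps)
    ultimately show ?thesis by (simp add: max_def)
  qed
  have lf: "ln (max (b/(b-a)) (b/a)) \<le> lfun al" using lfun_lower[OF al0] mx by simp
  have D: "Dconst a b = exp (3/2 * ln (b/(b-a)) + 3/2 * lfun al)"
    using bma b0 by (simp add: Dconst_def al_def powr_def exp_add)
  have mxe: "max (exp p) (exp q) = exp (max p q)" for p q :: real
    by (simp add: max_def)
  have c: "lr K delta m b (u-s) (z-x) + lr K delta m a (t-u) (y-z) \<le> 3/2 * ln (b/(b-a)) + 3/2 * ln (max (b/(b-a)) (b/a))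
     + max (lr K delta m (b-a) (u-s) (z-x)) (lr K delta m a (t-u) (y-z)) + lr K delta m a ((u-s)+(t-u)) ((z-x)+(y-z))"
    by (rule core) (use assms in auto)
  show ?thesis
    unfolding r1 r2 r3 r4 D mxe
    using c lf by (simp add: exp_add[symmetric])
qed

end
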